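(* For all $k>0$, all powers of $x$ that appear in $T_2,T_3,\dots,T_{k+1}$ (written as polynomials in $x$ and $y$ with coefficients in $k$ via the recursive construction) are multiples of $d_k=\gcd(p_1,\dots,p_k)$.
   Context: Setting: $k$ (the base field) is algebraically closed of characteristic $0$; $\nu^*$ is a $k$-valuation of a function field $K^*$ of transcendence degree $2$ with valuation ring $V^*$, value group a subgroup of $\mathbb{Q}$ and residue field $k$; $S$ is an algebraic two-dimensional regular local ring with quotient field $K^*$ dominated by $V^*$, with regular parameters $(x,y)$, and $\nu^*(x)=1$. Jumping polynomials: $T_0=x$, $T_1=y$, $q_0=\infty$, $p_1,q_1$ coprime positive integers with $\nu^*(y)=p_1/q_1$; for $i\ge1$, $n_{i,j}$ ($0\le j<i$) are nonnegative integers with $n_{i,j}<q_j$ and $q_i\nu^*(T_i)=\sum_{j<i}n_{i,j}\nu^*(T_j)$, $\lambda_i\in k$ is the residue of $T_i^{q_i}/\prod_{j<i}T_j^{n_{i,j}}$, $T_{i+1}=T_i^{q_i}-\lambda_i\prod_{j<i}T_j^{n_{i,j}}$, and $p_{i+1},q_{i+1}$ are coprime positive integers with $\nu^*(T_{i+1})=q_i\nu^*(T_i)+\frac{1}{q_1\cdots q_i}\frac{p_{i+1}}{q_{i+1}}$. *)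

theory Defs
  imports "HOL-Computational_Algebra.Polynomial"
begin

(* Bivariate polynomials over k are represented as 'k poly poly:
   the outer variable is y, the coefficients are polynomials in x.
   So the monomial x^a y^b has coefficient  coeff (coeff P b) a. *)

definition varX :: "'k::comm_ring_1 poly poly" where
  "varX = [: [:0, 1:] :]"

definition varY :: "'k::comm_ring_1 poly poly" where
  "varY = [:0, 1:]"

definition constK :: "'k::comm_ring_1 \<Rightarrow> 'k poly poly" where
  "constK c = [: [:c:] :]"

fun nuT :: "(nat \<Rightarrow> nat) \<Rightarrow> (nat \<Rightarrow> nat) \<Rightarrow> nat \<Rightarrow> rat" where
  "nuT p q 0 = 1"
| "nuT p q (Suc 0) = of_nat (p 1) / of_nat (q 1)"
| "nuT p q (Suc (Suc i)) =
     of_nat (q (Suc i)) * nuT p q (Suc i)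
     + (1 / (\<Prod>j\<in>{1..Suc i}. of_nat (q j))) * (of_nat (p (Suc (Suc i))) / of_nat (q (Suc (Suc i))))"

fun Tlist :: "(nat \<Rightarrow> nat) \<Rightarrow> (nat \<Rightarrow> nat \<Rightarrow> nat) \<Rightarrow> (nat \<Rightarrow> 'k::comm_ring_1)
               \<Rightarrow> nat \<Rightarrow> 'k poly poly list" where
  "Tlist q n lam 0 = [varX]"
| "Tlist q n lam (Suc 0) = [varX, varY]"
| "Tlist q n lam (Suc (Suc m)) =
     (let L = Tlist q n lam (Suc m); i = Suc m in
      L @ [L ! i ^ q i - constK (lam i) * (\<Prod>j<i. (L ! j) ^ n i j)])"

definition Tpoly :: "(nat \<Rightarrow> nat) \<Rightarrow> (nat \<Rightarrow> nat \<Rightarrow> nat) \<Rightarrow> (nat \<Rightarrow> 'k::comm_ring_1)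
               \<Rightarrow> nat \<Rightarrow> 'k poly poly" where
  "Tpoly q n lam i = Tlist q n lam i ! i"

definition x_power_occurs :: "'k::comm_ring_1 poly poly \<Rightarrow> nat \<Rightarrow> bool" where
  "x_power_occurs P a \<longleftrightarrow> (\<exists>b. coeff (coeff P b) a \<noteq> 0)"

end

theory Submission
  imports Defs
begin

definition gx :: "nat \<Rightarrow> 'k::comm_ring_1 poly \<Rightarrow> bool" where
  "gx d A \<longleftrightarrow> (\<forall>a. coeff A a \<noteq> 0 \<longrightarrow> d dvd a)"

definition gp :: "nat \<Rightarrow> 'k::comm_ring_1 poly poly \<Rightarrow> bool" where
  "gp d P \<longleftrightarrow> (\<forall>b. gx d (coeff P b))"

lemma gx_0: "gx d 0" by (simp add: gx_def)
lemma gx_add: "gx d A \<Longrightarrow> gx d B \<Longrightarrow> gx d (A + B)"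
  unfolding gx_def by (metis add.right_neutral coeff_add)
lemma gx_uminus: "gx d A \<Longrightarrow> gx d (- A)"
  unfolding gx_def by simp
lemma gx_diff: "gx d A \<Longrightarrow> gx d B \<Longrightarrow> gx d (A - B)"
  using gx_add[of d A "-B"] gx_uminus[of d B] by simp
lemma gx_sum: "(\<And>i. i \<in> S \<Longrightarrow> gx d (f i)) \<Longrightarrow> gx d (sum f S)"
  by (induction S rule: infinite_finite_induct) (auto simp: gx_0 gx_add)
lemma gx_mult: assumes "gx d A" "gx d B" shows "gx d (A * B)"
  unfolding gx_def
proof (intro allI impI)
  fix a assume "coeff (A * B) a \<noteq> 0"
  then have "(\<Sum>i\<le>a. coeff A i * coeff B (a - i)) \<noteq> 0" by (simp add: coeff_mult)
  then obtain i where i: "i \<le> a" "coeff A i * coeff B (a - i) \<noteq> 0"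
    by (metis (no_types, lifting) atMost_iff sum.neutral)
  then have "coeff A i \<noteq> 0" "coeff B (a - i) \<noteq> 0" by auto
  then have "d dvd i" "d dvd (a - i)" using assms unfolding gx_def by blast+
  then have "d dvd (i + (a - i))" by (rule dvd_add)
  with i show "d dvd a" by simp
qed
lemma gx_const: "gx d [:c:]"
  unfolding gx_def by (auto simp: coeff_pCons split: nat.splits)
lemma gx_xpow: "d dvd m \<Longrightarrow> gx d ([:0,1:] ^ m)"
  unfolding gx_def using coeff_monom[of 1 m] monom_altdef[of 1 m]
  by (metis smult_1_left)

lemma gp_add: "gp d A \<Longrightarrow> gp d B \<Longrightarrow> gp d (A + B)"
  unfolding gp_def by (simp add: gx_add)
lemma gp_diff: "gp d A \<Longrightarrow> gp d B \<Longrightarrow> gp d (A - B)"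
  unfolding gp_def by (simp add: gx_diff)
lemma gp_mult: assumes "gp d A" "gp d B" shows "gp d (A * B)"
  unfolding gp_def coeff_mult using assms unfolding gp_def
  by (intro allI gx_sum gx_mult) auto
lemma gp_const: "gx d c \<Longrightarrow> gp d [:c:]"
  unfolding gp_def by (auto simp: coeff_pCons gx_0 split: nat.splits)
lemma gp_1: "gp d 1"
proof -
  have "gp d [:[:1:]:]" by (rule gp_const[OF gx_const])
  moreover have "[:[:1:]:] = (1 :: 'a poly poly)" by (simp add: pCons_one)
  ultimately show ?thesis by metis
qed
lemma gp_power: "gp d A \<Longrightarrow> gp d (A ^ m)"
proof (induction m)
  case 0 show ?case unfolding power_0 by (rule gp_1)
next
  case (Suc m) then show ?case unfolding power_Suc by (intro gp_mult)
qed
lemma gp_prod: "(\<And>i. i \<in> S \<Longrightarrow> gp d (f i)) \<Longrightarrow> gp d (prod f S)"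
proof (induction S rule: infinite_finite_induct)
  case (infinite A) then show ?case by (simp add: gp_1)
next
  case empty then show ?case by (simp add: gp_1)
next
  case (insert x F) then show ?case by (simp add: gp_mult)
qed
lemma gx_1: "gx d 1" unfolding gx_def by (simp add: coeff_1)
lemma gp_varY: "gp d varY"
  unfolding gp_def varY_def by (auto simp: coeff_pCons gx_0 gx_1 split: nat.splits)
lemma gp_constK: "gp d (constK c)"
  unfolding constK_def by (rule gp_const[OF gx_const])
lemma gp_varX_pow: "d dvd m \<Longrightarrow> gp d (varX ^ m)"
  unfolding varX_def poly_const_pow by (rule gp_const[OF gx_xpow])

lemma Tlist_len: "length (Tlist q n lam m) = Suc m"
  by (induction q n lam m rule: Tlist.induct) (auto simp: Let_def)

lemma Tlist_nth: "j \<le> m \<Longrightarrow> Tlist q n lam m ! j = Tpoly q n lam j"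
proof (induction m arbitrary: j)
  case 0 then show ?case by (simp add: Tpoly_def)
next
  case (Suc m)
  show ?case
  proof (cases "j = Suc m")
    case True then show ?thesis by (simp add: Tpoly_def)
  next
    case False
    then have "j \<le> m" using Suc by simp
    have "Tlist q n lam (Suc m) ! j = Tlist q n lam m ! j"
    proof (cases m)
      case 0 then show ?thesis using \<open>j \<le> m\<close> by simp
    next
      case (Suc m')
      then show ?thesis using \<open>j \<le> m\<close> Tlist_len[of q n lam m]
        by (simp add: Let_def nth_append)
    qed
    then show ?thesis using Suc.IH[OF \<open>j \<le> m\<close>] by simp
  qed
qed

lemma Tpoly_SS: "Tpoly q n lam (Suc (Suc m)) =
   Tpoly q n lam (Suc m) ^ q (Suc m) - constK (lam (Suc m)) * (\<Prod>j<Suc m. Tpoly q n lam j ^ n (Suc m) j)"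
  using Tlist_len[of q n lam "Suc m"]
  by (simp add: Tpoly_def[of q n lam "Suc (Suc m)"] Let_def nth_append Tlist_nth)

lemma Tpoly_1: "Tpoly q n lam (Suc 0) = varY" by (simp add: Tpoly_def)
lemma Tpoly_0: "Tpoly q n lam 0 = varX" by (simp add: Tpoly_def)

lemma gp_T:
  assumes "\<And>i. 1 \<le> i \<Longrightarrow> i \<le> k \<Longrightarrow> d dvd n i 0"
  shows "1 \<le> i \<Longrightarrow> i \<le> Suc k \<Longrightarrow> gp d (Tpoly q n lam i)"
proof (induction i rule: less_induct)
  case (less i)
  show ?case
  proof (cases i)
    case 0 then show ?thesis using less by simp
  next
    case (Suc m)
    show ?thesis
    proof (cases m)
      case 0 then show ?thesis using Suc by (simp add: Tpoly_1 gp_varY)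
    next
      case (Suc m')
      have h: "gp d (Tpoly q n lam j ^ n (Suc m') j)" if "j < Suc m'" for j
      proof (cases j)
        case 0
        have "d dvd n (Suc m') 0" using assms less.prems \<open>i = Suc m\<close> Suc by simp
        then show ?thesis using 0 by (simp add: Tpoly_0 gp_varX_pow)
      next
        case (Suc j') then show ?thesis
          using less.IH[of j] that less.prems \<open>i = Suc m\<close> \<open>m = Suc m'\<close> by (auto intro: gp_power)
      qed
      have "gp d (Tpoly q n lam (Suc m'))" 
        using less.IH[of "Suc m'"] less.prems \<open>i = Suc m\<close> \<open>m = Suc m'\<close> by auto
      then have "gp d (Tpoly q n lam (Suc (Suc m')))"
        unfolding Tpoly_SS by (intro gp_diff gp_power gp_mult gp_constK gp_prod h) auto
      then show ?thesis using \<open>i = Suc m\<close> \<open>m = Suc m'\<close> by simp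
    qed
  qed
qed


lemma int_div_Ints: "(d::nat) dvd m \<Longrightarrow> (of_nat m / of_nat d :: rat) \<in> \<int>"
proof -
  assume "d dvd m" then obtain c where "m = d * c" by blast
  then show ?thesis
    by (cases "d = 0") (simp_all)
qed

lemma Ints_div_dvd:
  assumes "(d::nat) > 0" "(of_nat m / of_nat d :: rat) \<in> \<int>" shows "d dvd m"
proof -
  obtain z where z: "(of_nat m / of_nat d :: rat) = of_int z" using assms(2) Ints_cases by blast
  then have "(of_nat m :: rat) = of_nat d * of_int z" using assms(1) by (simp add: field_simps)
  then have "int m = int d * z" by (metis of_int_eq_iff of_int_mult of_int_of_nat_eq)
  then have "int d dvd int m" by simp
  then show ?thesis by simp
qed

theorem corollary7p2:
  fixes p q :: "nat \<Rightarrow> nat"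
    and n :: "nat \<Rightarrow> nat \<Rightarrow> nat"
    and lam :: "nat \<Rightarrow> 'k::{alg_closed_field, field_char_0}"
    and k :: nat
  assumes "k > 0"
    and pq_pos: "\<And>i. 1 \<le> i \<Longrightarrow> i \<le> k \<Longrightarrow> p i > 0 \<and> q i > 0"
    and pq_coprime: "\<And>i. 1 \<le> i \<Longrightarrow> i \<le> k \<Longrightarrow> coprime (p i) (q i)"
    and n_bound: "\<And>i j. 1 \<le> i \<Longrightarrow> i \<le> k \<Longrightarrow> 1 \<le> j \<Longrightarrow> j < i \<Longrightarrow> n i j < q j"
    and n_rel: "\<And>i. 1 \<le> i \<Longrightarrow> i \<le> k \<Longrightarrow>
                  of_nat (q i) * nuT p q i = (\<Sum>j<i. of_nat (n i j) * nuT p q j)"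
    and lam_nz: "\<And>i. 1 \<le> i \<Longrightarrow> i \<le> k \<Longrightarrow> lam i \<noteq> 0"
  shows "\<forall>i\<in>{2..k+1}. \<forall>a. x_power_occurs (Tpoly q n lam i) a \<longrightarrow> Gcd (p ` {1..k}) dvd a"
proof -
  define d where "d = Gcd (p ` {1..k})"
  define Qr where "Qr m = (\<Prod>j\<in>{1..m}. of_nat (q j) :: rat)" for m
  define Qn where "Qn m = (\<Prod>j\<in>{1..m}. q j)" for m
  have QrQn: "Qr m = of_nat (Qn m)" for m unfolding Qr_def Qn_def by simp
  have QrS: "Qr (Suc m) = Qr m * of_nat (q (Suc m))" for m
    unfolding Qr_def by (simp add: prod.nat_ivl_Suc' mult.commute)
  have dvdp: "d dvd p j" if "1 \<le> j" "j \<le> k" for j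
    unfolding d_def using that by (intro Gcd_dvd) auto
  have dpos: "d > 0"
  proof -
    have "p 1 \<in> p ` {1..k}" "p 1 \<noteq> 0" using pq_pos[of 1] \<open>k > 0\<close> by auto
    then have "d \<noteq> 0" unfolding d_def by (auto simp: Gcd_0_iff)
    then show ?thesis by simp
  qed
  have cop: "coprime d (q j)" if "1 \<le> j" "j \<le> k" for j
    using coprime_divisors[OF dvdp[OF that] dvd_refl pq_coprime[OF that]] .
  have Qr_nz: "Qr m \<noteq> 0" if "m \<le> k" for m
    unfolding Qr_def using that pq_pos by (auto simp: prod_zero_iff)
  have A: "Qr i * nuT p q i / of_nat d \<in> \<int>" if "1 \<le> i" "i \<le> k" for i
    using that
  proof (induction i)
    case 0 then show ?case by simp
  next
    case (Suc i)
    show ?case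
    proof (cases i)
      case 0
      have "q 1 > 0" using pq_pos[of 1] Suc.prems by simp
      then have "Qr (Suc i) * nuT p q (Suc i) = of_nat (p 1)"
        using 0 by (simp add: Qr_def)
      then show ?thesis using int_div_Ints[OF dvdp[of 1]] Suc.prems 0 by simp
    next
      case (Suc i')
      have qs: "q (Suc (Suc i')) > 0" "q (Suc i') > 0"
        using pq_pos Suc.prems \<open>i = Suc i'\<close> by auto
      have nz: "Qr (Suc i') \<noteq> 0" using Qr_nz Suc.prems \<open>i = Suc i'\<close> by simp
      have IH: "Qr (Suc i') * nuT p q (Suc i') / of_nat d \<in> \<int>"
        using Suc.IH Suc.prems \<open>i = Suc i'\<close> by simp
      have eq: "Qr (Suc (Suc i')) * nuT p q (Suc (Suc i')) / of_nat d =
          of_nat (q (Suc (Suc i'))) * of_nat (q (Suc i')) * (Qr (Suc i') * nuT p q (Suc i') / of_nat d)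
          + of_nat (p (Suc (Suc i'))) / of_nat d"
      proof -
        have nuSS: "nuT p q (Suc (Suc i')) = of_nat (q (Suc i')) * nuT p q (Suc i')
           + (1 / Qr (Suc i')) * (of_nat (p (Suc (Suc i'))) / of_nat (q (Suc (Suc i'))))"
          by (simp add: Qr_def)
        show ?thesis
          using qs nz dpos unfolding QrS[of "Suc i'"] nuSS
          by (simp add: field_simps del: nuT.simps)
      qed
      have "of_nat (p (Suc (Suc i'))) / (of_nat d :: rat) \<in> \<int>"
        using int_div_Ints[OF dvdp] Suc.prems \<open>i = Suc i'\<close> by simp
      then have "Qr (Suc (Suc i')) * nuT p q (Suc (Suc i')) / of_nat d \<in> \<int>"
        using IH unfolding eq by (intro Ints_add Ints_mult) auto
      then show ?thesis using \<open>i = Suc i'\<close> by simp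
    qed
  qed
  have C: "Qr m * nuT p q j / of_nat d \<in> \<int>" if "1 \<le> j" "j \<le> m" "m \<le> k" for j m
    using that
  proof (induction m)
    case 0 then show ?case by simp
  next
    case (Suc m)
    show ?case
    proof (cases "j = Suc m")
      case True then show ?thesis using A Suc.prems by simp
    next
      case False
      then have "Qr m * nuT p q j / of_nat d \<in> \<int>" using Suc by simp
      then have "of_nat (q (Suc m)) * (Qr m * nuT p q j / of_nat d) \<in> \<int>"
        by (intro Ints_mult) auto
      then show ?thesis unfolding QrS by (simp add: field_simps)
    qed
  qed
  have B: "d dvd n i 0" if "1 \<le> i" "i \<le> k" for i
  proof -
    have "i \<noteq> 0" using that(1) by simp
    then obtain m where m: "i = Suc m" using not0_implies_Suc by blast
    have rel: "of_nat (q i) * nuT p q i = of_nat (n i 0) + (\<Sum>j<m. of_nat (n i (Suc j)) * nuT p q (Suc j))"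
      using n_rel[OF that] unfolding m sum.lessThan_Suc_shift by simp
    have "Qr i * nuT p q i = Qr m * of_nat (n i 0) + (\<Sum>j<m. of_nat (n i (Suc j)) * (Qr m * nuT p q (Suc j)))"
    proof -
      have "Qr i * nuT p q i = Qr m * (of_nat (q i) * nuT p q i)"
        unfolding m QrS by (simp only: mult_ac)
      also have "\<dots> = Qr m * (of_nat (n i 0) + (\<Sum>j<m. of_nat (n i (Suc j)) * nuT p q (Suc j)))"
        by (simp only: rel)
      also have "\<dots> = Qr m * of_nat (n i 0) + (\<Sum>j<m. of_nat (n i (Suc j)) * (Qr m * nuT p q (Suc j)))"
        by (simp only: distrib_left sum_distrib_left mult_ac)
      finally show ?thesis .
    qed
    then have eq: "Qr m * of_nat (n i 0) / of_nat d = Qr i * nuT p q i / of_nat d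
        - (\<Sum>j<m. of_nat (n i (Suc j)) * (Qr m * nuT p q (Suc j) / of_nat d))"
      by (simp add: add_divide_distrib sum_divide_distrib)
    have "Qr m * of_nat (n i 0) / of_nat d \<in> \<int>"
      unfolding eq using that m
      by (intro Ints_diff Ints_sum Ints_mult A C) auto
    then have "d dvd Qn m * n i 0" using dpos
      by (intro Ints_div_dvd) (auto simp: QrQn)
    moreover have "coprime d (Qn m)" unfolding Qn_def
      using m that by (intro prod_coprime_right cop) auto
    ultimately show ?thesis by (simp add: coprime_dvd_mult_right_iff)
  qed
  show ?thesis
  proof (intro ballI allI impI)
    fix i a assume i: "i \<in> {2..k+1}" and occ: "x_power_occurs (Tpoly q n lam i) a"
    have "gp d (Tpoly q n lam i)" using gp_T[of k d n i q lam] B i by auto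
    then show "Gcd (p ` {1..k}) dvd a" using occ
      unfolding gp_def gx_def x_power_occurs_def d_def by blast
  qed
qed

end
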